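(* Let $n\geq 4$, let $S$ be the set of all $3$-cycles in $S_n$, and let $CAG_n=\mathrm{Cay}(A_n,S)$. Then the map $h:\alpha\mapsto\alpha^{-1}$ ($\alpha\in A_n$) is an automorphism of the graph $CAG_n$. In particular, $CAG_n$ is not a normal Cayley graph, i.e. $R(A_n)$ is not a normal subgroup of $\mathrm{Aut}(CAG_n)$.
   Context: For a finite group $\Gamma$ and a subset $T\subseteq\Gamma$ with $e\notin T$ and $T=T^{-1}$, the Cayley graph $\mathrm{Cay}(\Gamma,T)$ is the undirected graph with vertex set $\Gamma$ and edge set $\{\{\gamma,t\gamma\}\mid \gamma\in\Gamma, t\in T\}$. The right regular representation $R(\Gamma)=\{r_\gamma: x\mapsto x\gamma\mid\gamma\in\Gamma\}$ is a subgroup of $\mathrm{Aut}(\mathrm{Cay}(\Gamma,T))$; the Cayley graph is called normal if $R(\Gamma)$ is a normal subgroup of $\mathrm{Aut}(\mathrm{Cay}(\Gamma,T))$. *)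

theory Defs
  imports "HOL-Algebra.Sym_Groups" "HOL-Algebra.Bij"
begin

definition cayley_adj :: "('a, 'b) monoid_scheme \<Rightarrow> 'a set \<Rightarrow> 'a \<Rightarrow> 'a \<Rightarrow> bool" where
  "cayley_adj G T x y \<longleftrightarrow> x \<in> carrier G \<and> y \<in> carrier G \<and>
     ((\<exists>t\<in>T. y = t \<otimes>\<^bsub>G\<^esub> x) \<or> (\<exists>t\<in>T. x = t \<otimes>\<^bsub>G\<^esub> y))"

definition cayley_aut :: "('a, 'b) monoid_scheme \<Rightarrow> 'a set \<Rightarrow> ('a \<Rightarrow> 'a) monoid" where
  "cayley_aut G T = (BijGroup (carrier G)) \<lparr> carrier :=
     {f \<in> Bij (carrier G). \<forall>x\<in>carrier G. \<forall>y\<in>carrier G.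
        cayley_adj G T x y \<longleftrightarrow> cayley_adj G T (f x) (f y)} \<rparr>"

definition right_reg :: "('a, 'b) monoid_scheme \<Rightarrow> ('a \<Rightarrow> 'a) set" where
  "right_reg G = {(\<lambda>x\<in>carrier G. x \<otimes>\<^bsub>G\<^esub> g) | g. g \<in> carrier G}"

end

theory Submission
  imports Defs
begin

lemma alt_facts:
  assumes "p \<in> carrier (alt_group n)"
  shows "p permutes {1..n}" "bij p" "inv' p \<in> carrier (alt_group n)"
        "inv' (inv' p) = p" "p \<circ> inv' p = id" "inv' p \<circ> p = id"
proof -
  show pp: "p permutes {1..n}" using assms alt_group_carrier by blast
  show bp: "bij p" using pp permutes_bij by blast
  show "inv' p \<in> carrier (alt_group n)" using alt_group_inv_closed assms by blast
  show "inv' (inv' p) = p" using bp by (simp add: inv_inv_eq)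
  show "p \<circ> inv' p = id" using pp permutes_inv_o(1) by blast
  show "inv' p \<circ> p = id" using pp permutes_inv_o(2) by blast
qed

lemma conj_three:
  assumes "t \<in> three_cycles n" "p permutes {1..n}"
  shows "p \<circ> t \<circ> inv' p \<in> three_cycles n"
proof -
  obtain cs where cs: "t = cycle_of_list cs" "cycle cs" "length cs = 3" "set cs \<subseteq> {1..n}"
    using assms(1) by auto
  have bp: "bij p" using assms(2) permutes_bij by blast
  have e1: "p \<circ> t \<circ> inv' p = cycle_of_list (map p cs)"
    using conjugation_of_cycle[OF cs(2) bp] cs(1) by simp
  have e2: "cycle (map p cs)" using cs(2) bp by (simp add: distinct_map bij_is_inj inj_on_subset[OF _ subset_UNIV])
  have e3: "set (map p cs) \<subseteq> {1..n}" using cs(4) assms(2) permutes_in_image by fastforce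
  have e4: "length (map p cs) = 3" using cs(3) by simp
  have "\<exists>cs'. p \<circ> t \<circ> inv' p = cycle_of_list cs' \<and> cycle cs' \<and> length cs' = 3 \<and> set cs' \<subseteq> {1..n}"
    by (rule exI[of _ "map p cs"]) (intro conjI e1 e2 e3 e4)
  thus ?thesis by (simp only: mem_Collect_eq)
qed

lemma adj_fwd:
  assumes x: "x \<in> carrier (alt_group n)" and y: "y \<in> carrier (alt_group n)"
    and t: "t \<in> three_cycles n" and e: "y = t \<circ> x"
  shows "\<exists>s\<in>three_cycles n. inv' x = s \<circ> inv' y"
proof -
  have tc: "t \<in> carrier (alt_group n)" by (rule subsetD[OF three_cycles_incl t])
  note X = alt_facts[OF x] and Y = alt_facts[OF y] and T = alt_facts[OF tc]
  have e1: "inv' y \<circ> t = inv' x"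
  proof -
    have "inv' y = inv' x \<circ> inv' t" using e X(2) T(2) by (simp add: o_inv_distrib)
    hence "inv' y \<circ> t = inv' x \<circ> (inv' t \<circ> t)" by (simp add: o_assoc)
    thus ?thesis using T(6) by simp
  qed
  have e2: "inv' y \<circ> t = (inv' y \<circ> t \<circ> inv' (inv' y)) \<circ> inv' y"
    using Y(4,5) by (simp add: comp_assoc)
  have s: "inv' y \<circ> t \<circ> inv' (inv' y) \<in> three_cycles n"
    by (rule conj_three[OF t alt_facts(1)[OF Y(3)]])
  have eq: "inv' x = (inv' y \<circ> t \<circ> inv' (inv' y)) \<circ> inv' y" by (rule trans[OF sym[OF e1] e2])
  show ?thesis
  proof (rule bexI[OF _ s])
    show "inv' x = (inv' y \<circ> t \<circ> inv' (inv' y)) \<circ> inv' y" by (rule eq)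
  qed
qed

lemma adj_inv:
  assumes "cayley_adj (alt_group n) (three_cycles n) x y"
  shows "cayley_adj (alt_group n) (three_cycles n) (inv' x) (inv' y)"
proof -
  have x: "x \<in> carrier (alt_group n)" and y: "y \<in> carrier (alt_group n)"
    and d: "(\<exists>t\<in>three_cycles n. y = t \<circ> x) \<or> (\<exists>t\<in>three_cycles n. x = t \<circ> y)"
    using assms unfolding cayley_adj_def alt_group_mult by auto
  have ix: "inv' x \<in> carrier (alt_group n)" and iy: "inv' y \<in> carrier (alt_group n)"
    using x y alt_facts(3) by auto
  from d have "(\<exists>s\<in>three_cycles n. inv' y = s \<circ> inv' x) \<or> (\<exists>s\<in>three_cycles n. inv' x = s \<circ> inv' y)"
  proof
    assume "\<exists>t\<in>three_cycles n. y = t \<circ> x"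
    then obtain t where "t \<in> three_cycles n" "y = t \<circ> x" by blast
    from adj_fwd[OF x y this] show ?thesis by blast
  next
    assume "\<exists>t\<in>three_cycles n. x = t \<circ> y"
    then obtain t where "t \<in> three_cycles n" "x = t \<circ> y" by blast
    from adj_fwd[OF y x this] show ?thesis by blast
  qed
  thus ?thesis using ix iy unfolding cayley_adj_def alt_group_mult by blast
qed

theorem theorem2p1:
  fixes n :: nat
  assumes "n \<ge> 4"
  shows "(\<lambda>\<alpha>\<in>carrier (alt_group n). inv\<^bsub>alt_group n\<^esub> \<alpha>)
           \<in> carrier (cayley_aut (alt_group n) (three_cycles n))
         \<and> \<not> (right_reg (alt_group n) \<lhd> cayley_aut (alt_group n) (three_cycles n))"
proof -
  define C where "C = carrier (alt_group n)"
  define h where "h = (\<lambda>\<alpha>\<in>carrier (alt_group n). inv\<^bsub>alt_group n\<^esub> \<alpha>)"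
  have h: "h = (\<lambda>\<alpha>\<in>C. inv' \<alpha>)" unfolding h_def C_def
    using alt_group_inv_equality by (intro restrict_ext) auto
  have hx: "\<And>x. x \<in> C \<Longrightarrow> h x = inv' x" using h by simp
  have hC: "\<And>x. x \<in> C \<Longrightarrow> h x \<in> C" using hx alt_facts(3) C_def by simp
  have hh: "\<And>x. x \<in> C \<Longrightarrow> h (h x) = x" using hx hC alt_facts(4) C_def by simp
  have hB: "h \<in> Bij C"
  proof -
    have "h \<in> extensional C" by (simp add: h)
    moreover have "bij_betw h C C" by (rule bij_betwI[where g=h]) (auto intro: hC hh)
    ultimately show ?thesis unfolding Bij_def by blast
  qed
  have adjC: "\<And>x y. cayley_adj (alt_group n) (three_cycles n) x y \<Longrightarrow> x \<in> C \<and> y \<in> C"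
    unfolding cayley_adj_def C_def by blast
  have adjh: "\<And>x y. x \<in> C \<Longrightarrow> y \<in> C \<Longrightarrow> cayley_adj (alt_group n) (three_cycles n) x y
       \<Longrightarrow> cayley_adj (alt_group n) (three_cycles n) (h x) (h y)"
  proof -
    fix x y assume "x \<in> C" "y \<in> C" "cayley_adj (alt_group n) (three_cycles n) x y"
    thus "cayley_adj (alt_group n) (three_cycles n) (h x) (h y)"
      using hx[of x] hx[of y] adj_inv[of n x y] by simp
  qed
  have hA: "h \<in> carrier (cayley_aut (alt_group n) (three_cycles n))"
  proof -
    have "\<forall>x\<in>C. \<forall>y\<in>C. cayley_adj (alt_group n) (three_cycles n) x y \<longleftrightarrow>
        cayley_adj (alt_group n) (three_cycles n) (h x) (h y)"
    proof (intro ballI iffI)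
      fix x y assume "x \<in> C" "y \<in> C"
      { assume "cayley_adj (alt_group n) (three_cycles n) x y"
        thus "cayley_adj (alt_group n) (three_cycles n) (h x) (h y)" using adjh \<open>x \<in> C\<close> \<open>y \<in> C\<close> by blast }
      { assume a: "cayley_adj (alt_group n) (three_cycles n) (h x) (h y)"
        have "cayley_adj (alt_group n) (three_cycles n) (h (h x)) (h (h y))"
          using adjh[OF hC hC a] \<open>x \<in> C\<close> \<open>y \<in> C\<close> by blast
        thus "cayley_adj (alt_group n) (three_cycles n) x y" using hh \<open>x \<in> C\<close> \<open>y \<in> C\<close> by simp }
    qed
    thus ?thesis unfolding cayley_aut_def using hB by (simp add: C_def)
  qed
  show ?thesis
  proof (rule conjI)
    show "(\<lambda>\<alpha>\<in>carrier (alt_group n). inv\<^bsub>alt_group n\<^esub> \<alpha>)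
           \<in> carrier (cayley_aut (alt_group n) (three_cycles n))" using hA unfolding h_def .
    show "\<not> (right_reg (alt_group n) \<lhd> cayley_aut (alt_group n) (three_cycles n))"
    proof
      let ?G = "cayley_aut (alt_group n) (three_cycles n)"
      assume N: "right_reg (alt_group n) \<lhd> ?G"
      interpret N: normal "right_reg (alt_group n)" ?G by (rule N)
      have mult: "\<And>a b. a \<in> carrier ?G \<Longrightarrow> b \<in> carrier ?G \<Longrightarrow> a \<otimes>\<^bsub>?G\<^esub> b = compose C a b"
        unfolding cayley_aut_def BijGroup_def C_def by auto
      have one: "\<one>\<^bsub>?G\<^esub> = (\<lambda>x\<in>C. x)"
        unfolding cayley_aut_def BijGroup_def C_def by auto
      have hh1: "compose C h h = (\<lambda>x\<in>C. x)"
        unfolding compose_def by (intro restrict_ext) (simp add: hh)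
      have "h \<otimes>\<^bsub>?G\<^esub> h = \<one>\<^bsub>?G\<^esub>"
        using mult[OF hA hA] hh1 one by simp
      hence invh: "inv\<^bsub>?G\<^esub> h = h" using N.inv_equality hA by blast
      define c :: "nat \<Rightarrow> nat" where "c = cycle_of_list [1,2,3]"
      define d :: "nat \<Rightarrow> nat" where "d = cycle_of_list [1,2,4]"
      have "set [1,2,3::nat] \<subseteq> {1..n}" "set [1,2,4::nat] \<subseteq> {1..n}" using assms by auto
      moreover have "cycle [1,2,3::nat]" "cycle [1,2,4::nat]" by simp_all
      moreover have "length [1,2,3::nat] = 3" "length [1,2,4::nat] = 3" by simp_all
      ultimately have "c \<in> three_cycles n" "d \<in> three_cycles n" unfolding c_def d_def by blast+
      hence c3: "c \<in> C" and d3: "d \<in> C" using three_cycles_incl unfolding C_def by blast+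
      define g where "g = inv' c"
      have gC: "g \<in> C" using alt_facts(3) c3 g_def C_def by simp
      define r where "r = (\<lambda>x\<in>C. x \<otimes>\<^bsub>alt_group n\<^esub> g)"
      have rR: "r \<in> right_reg (alt_group n)" unfolding r_def right_reg_def C_def
        using gC C_def by blast
      have rG: "r \<in> carrier ?G" using rR N.subset by blast
      have "h \<otimes>\<^bsub>?G\<^esub> r \<otimes>\<^bsub>?G\<^esub> inv\<^bsub>?G\<^esub> h \<in> right_reg (alt_group n)"
        using N.inv_op_closed2 hA rR by blast
      hence "h \<otimes>\<^bsub>?G\<^esub> r \<otimes>\<^bsub>?G\<^esub> h \<in> right_reg (alt_group n)" using invh by simp
      moreover have hrG: "h \<otimes>\<^bsub>?G\<^esub> r \<in> carrier ?G" using N.m_closed hA rG by blast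
      moreover have "h \<otimes>\<^bsub>?G\<^esub> r = compose C h r" using mult[OF hA rG] .
      ultimately have "compose C (compose C h r) h \<in> right_reg (alt_group n)"
        using mult[OF hrG hA] by simp
      then obtain k where kC: "k \<in> C" and
        keq: "compose C (compose C h r) h = (\<lambda>x\<in>C. x \<circ> k)"
        unfolding right_reg_def C_def alt_group_mult by blast
      have mc: "\<And>a b. a \<in> C \<Longrightarrow> b \<in> C \<Longrightarrow> a \<circ> b \<in> C"
        using monoid.m_closed[OF group.is_monoid[OF alt_group_is_group]] unfolding C_def alt_group_mult
        by blast
      have ev: "\<And>x. x \<in> C \<Longrightarrow> inv' (inv' x \<circ> g) = x \<circ> k"
      proof -
        fix x assume xC: "x \<in> C"
        have 1: "compose C (compose C h r) h x = x \<circ> k" using keq xC by simp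
        have ixC: "inv' x \<in> C" using alt_facts(3)[OF xC[unfolded C_def]] unfolding C_def .
        have 2: "inv' x \<circ> g \<in> C" using mc[OF ixC gC] .
        have "compose C (compose C h r) h x = h (r (h x))" using xC hC by (simp add: compose_def)
        also have "\<dots> = h (r (inv' x))" using hx xC by simp
        also have "\<dots> = h (inv' x \<circ> g)" using ixC by (simp add: r_def alt_group_mult)
        also have "\<dots> = inv' (inv' x \<circ> g)" using hx 2 by simp
        finally show "inv' (inv' x \<circ> g) = x \<circ> k" using 1 by simp
      qed
      have cid: "\<And>x. x \<in> C \<Longrightarrow> inv' (inv' x \<circ> g) = c \<circ> x"
      proof -
        fix x assume xC: "x \<in> C"
        have xA: "x \<in> carrier (alt_group n)" using xC unfolding C_def .
        have gA: "g \<in> carrier (alt_group n)" using gC unfolding C_def .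
        have cA: "c \<in> carrier (alt_group n)" using c3 unfolding C_def .
        have b1: "bij (inv' x)" by (rule alt_facts(2)[OF alt_facts(3)[OF xA]])
        have b2: "bij g" by (rule alt_facts(2)[OF gA])
        have "inv' (inv' x \<circ> g) = inv' g \<circ> inv' (inv' x)"
          by (rule o_inv_distrib[OF b1 b2])
        also have "inv' (inv' x) = x" by (rule alt_facts(4)[OF xA])
        also have "inv' g = c" unfolding g_def by (rule alt_facts(4)[OF cA])
        finally show "inv' (inv' x \<circ> g) = c \<circ> x" .
      qed
      have "\<one>\<^bsub>alt_group n\<^esub> \<in> carrier (alt_group n)"
        by (rule monoid.one_closed[OF group.is_monoid[OF alt_group_is_group]])
      hence idC: "id \<in> C" unfolding alt_group_one C_def .
      have "id \<circ> k = c \<circ> id" using ev[OF idC] cid[OF idC] by (rule trans[OF sym])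
      hence ck: "c = k" by (simp only: id_comp comp_id)
      have "d \<circ> k = c \<circ> d" using ev[OF d3] cid[OF d3] by (rule trans[OF sym])
      hence "c \<circ> d = d \<circ> c" using ck by (rule_tac sym) (simp only:)
      hence "(c \<circ> d) 1 = (d \<circ> c) 1" by (rule fun_cong)
      hence "c (d 1) = d (c 1)" by (simp only: comp_apply)
      moreover have "c (d 1) = 3" "d (c 1) = 4"
        unfolding c_def d_def by (simp_all add: transpose_def)
      ultimately show False by simp
    qed
  qed
qed

end
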